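(* Assume the standing hypotheses and definitions in the context. For any $(t_0,y_0)\in\mathbb{R}\times\mathbb{R}^n$, the function $t\mapsto G(t,Y(t,t_0,y_0))$ is a solution of the system $x'=A(t)x+f(t,x)$.
   Context: Standing hypotheses: $A:\mathbb{R}\to\mathbb{R}^{n\times n}$ is continuous and bounded, $T(t,s)$ is the evolution operator of $x'=A(t)x$. $\mu:\mathbb{R}\to(0,\infty)$ is an increasing differentiable growth rate: $\mu(0)=1$, $\lim_{t\to-\infty}\mu(t)=0$, $\lim_{t\to+\infty}\mu(t)=+\infty$. The system $x'=A(t)x$ admits an algebraic dichotomy: projections $P(s)$, $Q(s)=I-P(s)$, constants $K,\alpha>0$ with $T(t,s)P(s)=P(t)T(t,s)$, $\|T(t,s)P(s)\|\le K(\mu(t)/\mu(s))^{-\alpha}$ ($t\ge s$), $\|T(t,s)Q(s)\|\le K(\mu(s)/\mu(t))^{-\alpha}$ ($t\le s$). $f:\mathbb{R}\times\mathbb{R}^n\to\mathbb{R}^n$ is continuous, $\|f(t,x)\|\le\beta\mu'(t)\mu^{-1}(t)$, $\|f(t,x_1)-f(t,x_2)\|\le\gamma\mu'(t)\mu^{-1}(t)\|x_1-x_2\|$ for constants $\beta,\gamma\ge0$, and $6K\gamma\alpha^{-1}<1$. $Y(t,\tau,\xi)$ is the solution of $x'=A(t)x$ with $Y(\tau)=\xi$. For each $(\tau,\xi)$, $g(t,(\tau,\xi))$ denotes the unique solution bounded on $\mathbb{R}$ of $Z'=A(t)Z+f(t,Y(t,\tau,\xi)+Z)$ (it exists and is unique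 under these hypotheses). Define $G(t,y)=y+g(t,(t,y))$. *)

theory Defs
  imports "HOL-Analysis.Analysis"
begin

text \<open>Matrices are elements of real^'n^'n; vectors are real^'n.  Matrix norms are the
operator norms induced by the Euclidean vector norm.\<close>

definition opnorm :: "real^'n^'n \<Rightarrow> real" where
  "opnorm M = onorm (\<lambda>x. M *v x)"

text \<open>Y(t,tau,xi): solution of x' = A(t)x with Y(tau) = xi, written through the
evolution operator T of x' = A(t)x.\<close>

definition Ysol :: "(real \<Rightarrow> real \<Rightarrow> real^'n^'n) \<Rightarrow> real \<Rightarrow> real \<Rightarrow> real^'n \<Rightarrow> real^'n" where
  "Ysol T t \<tau> \<xi> = T t \<tau> *v \<xi>"

definition gsol :: "(real \<Rightarrow> real^'n^'n) \<Rightarrow> (real \<Rightarrow> real^'n \<Rightarrow> real^'n)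
    \<Rightarrow> (real \<Rightarrow> real \<Rightarrow> real^'n^'n) \<Rightarrow> real \<Rightarrow> real^'n \<Rightarrow> (real \<Rightarrow> real^'n)" where
  "gsol A f T \<tau> \<xi> = (THE Z. (\<forall>t. (Z has_vector_derivative
        (A t *v Z t + f t (Ysol T t \<tau> \<xi> + Z t))) (at t)) \<and> bounded (range Z))"

definition Gmap :: "(real \<Rightarrow> real^'n^'n) \<Rightarrow> (real \<Rightarrow> real^'n \<Rightarrow> real^'n)
    \<Rightarrow> (real \<Rightarrow> real \<Rightarrow> real^'n^'n) \<Rightarrow> real \<Rightarrow> real^'n \<Rightarrow> real^'n" where
  "Gmap A f T t y = y + gsol A f T t y t"

end

theory Submission
  imports Defs "HOL-Real_Asymp.Real_Asymp"
begin

lemma mv_norm: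
  fixes M :: "real^'n^'m"
  shows "norm (M *v x) \<le> real CARD('m) * real CARD('n) * norm M * norm x"
proof -
  have "\<And>i j. \<bar>M$i$j\<bar> \<le> norm M"
    by (rule order_trans[OF component_le_norm_cart Finite_Cartesian_Product.norm_nth_le])
  then have "onorm ((*v) M) \<le> real CARD('m) * real CARD('n) * norm M"
    by (rule onorm_le_matrix_component)
  moreover have "norm (M *v x) \<le> onorm ((*v) M) * norm x"
    by (rule onorm[OF matrix_vector_mul_bounded_linear])
  ultimately show ?thesis
    by (meson mult_right_mono norm_ge_zero order_trans)
qed

lemma growth_fwd:
  fixes X :: "real \<Rightarrow> real^'n"
  assumes M: "M \<ge> 0" "\<And>t x. norm (A t *v x) \<le> M * norm x"
    and d: "\<And>t. (X has_vector_derivative (A t *v X t)) (at t)"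
    and st: "s \<le> t"
  shows "norm (X t) \<le> exp (M * (t - s)) * norm (X s)"
proof -
  have phi: "((\<lambda>t. X t \<bullet> X t) has_real_derivative 2 * (X x \<bullet> (A x *v X x))) (at x)" for x
  proof -
    have "((\<lambda>t. X t \<bullet> X t) has_vector_derivative (X x \<bullet> (A x *v X x) + (A x *v X x) \<bullet> X x)) (at x)"
      by (rule bounded_bilinear.has_vector_derivative[OF bounded_bilinear_inner d d])
    then show ?thesis
      by (simp add: has_real_derivative_iff_has_vector_derivative inner_commute)
  qed
  have bnd: "\<bar>2 * (X x \<bullet> (A x *v X x))\<bar> \<le> 2 * M * (X x \<bullet> X x)" for x
  proof -
    have "\<bar>X x \<bullet> (A x *v X x)\<bar> \<le> norm (X x) * norm (A x *v X x)"
      by (rule Cauchy_Schwarz_ineq2)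
    also have "\<dots> \<le> norm (X x) * (M * norm (X x))"
      by (simp add: M(2) mult_left_mono)
    finally show ?thesis by (simp add: dot_square_norm power2_eq_square algebra_simps)
  qed
  let ?psi = "\<lambda>x. exp (-2*M*x) * (X x \<bullet> X x)"
  have "?psi s \<ge> ?psi t"
  proof (rule DERIV_nonpos_imp_nonincreasing[OF st])
    fix x
    have "(?psi has_real_derivative (exp (-2*M*x) * (2 * (X x \<bullet> (A x *v X x))) + (-2*M) * exp (-2*M*x) * (X x \<bullet> X x))) (at x)"
      by (auto intro!: derivative_eq_intros phi)
    moreover have "exp (-2*M*x) * (2 * (X x \<bullet> (A x *v X x))) + (-2*M) * exp (-2*M*x) * (X x \<bullet> X x) \<le> 0"
    proof -
      have "exp (-2*M*x) * (2 * (X x \<bullet> (A x *v X x))) \<le> exp (-2*M*x) * (2*M*(X x \<bullet> X x))"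
        using bnd[of x] by (intro mult_left_mono) auto
      then show ?thesis by (simp add: algebra_simps)
    qed
    ultimately show "\<exists>y. (?psi has_real_derivative y) (at x) \<and> y \<le> 0" by blast
  qed
  then have "norm (X t)^2 \<le> exp (2*M*(t-s)) * norm (X s)^2"
  proof -
    assume h: "?psi s \<ge> ?psi t"
    have "norm (X t)^2 = exp (2*M*t) * ?psi t"
      by (simp add: dot_square_norm mult.assoc[symmetric] exp_add[symmetric])
    also have "\<dots> \<le> exp (2*M*t) * ?psi s" using h by simp
    also have "\<dots> = exp (2*M*t) * (exp (- (2*M * s)) * norm (X s)^2)"
      by (simp add: dot_square_norm)
    also have "\<dots> = exp (2*M*(t-s)) * norm (X s)^2"
      by (simp add: mult.assoc[symmetric] exp_add[symmetric] right_diff_distrib)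
    finally show ?thesis .
  qed
  also have "\<dots> = (exp (M*(t-s)) * norm (X s))^2"
    by (simp add: power_mult_distrib exp_add[symmetric] power2_eq_square)
  finally show ?thesis
    by (rule power2_le_imp_le) simp
qed

lemma growth_bwd:
  fixes X :: "real \<Rightarrow> real^'n"
  assumes M: "M \<ge> 0" "\<And>t x. norm (A t *v x) \<le> M * norm x"
    and d: "\<And>t. (X has_vector_derivative (A t *v X t)) (at t)"
    and st: "t \<le> s"
  shows "norm (X t) \<le> exp (M * (s - t)) * norm (X s)"
proof -
  have phi: "((\<lambda>t. X t \<bullet> X t) has_real_derivative 2 * (X x \<bullet> (A x *v X x))) (at x)" for x
  proof -
    have "((\<lambda>t. X t \<bullet> X t) has_vector_derivative (X x \<bullet> (A x *v X x) + (A x *v X x) \<bullet> X x)) (at x)"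
      by (rule bounded_bilinear.has_vector_derivative[OF bounded_bilinear_inner d d])
    then show ?thesis
      by (simp add: has_real_derivative_iff_has_vector_derivative inner_commute)
  qed
  have bnd: "\<bar>2 * (X x \<bullet> (A x *v X x))\<bar> \<le> 2 * M * (X x \<bullet> X x)" for x
  proof -
    have "\<bar>X x \<bullet> (A x *v X x)\<bar> \<le> norm (X x) * norm (A x *v X x)"
      by (rule Cauchy_Schwarz_ineq2)
    also have "\<dots> \<le> norm (X x) * (M * norm (X x))"
      by (simp add: M(2) mult_left_mono)
    finally show ?thesis by (simp add: dot_square_norm power2_eq_square algebra_simps)
  qed
  let ?psi = "\<lambda>x. exp (2*M*x) * (X x \<bullet> X x)"
  have "?psi t \<le> ?psi s"
  proof (rule DERIV_nonneg_imp_nondecreasing[OF st])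
    fix x
    have "(?psi has_real_derivative (exp (2*M*x) * (2 * (X x \<bullet> (A x *v X x))) + (2*M) * exp (2*M*x) * (X x \<bullet> X x))) (at x)"
      by (auto intro!: derivative_eq_intros phi)
    moreover have "exp (2*M*x) * (2 * (X x \<bullet> (A x *v X x))) + (2*M) * exp (2*M*x) * (X x \<bullet> X x) \<ge> 0"
    proof -
      have "exp (2*M*x) * (2 * (X x \<bullet> (A x *v X x))) \<ge> exp (2*M*x) * (-(2*M*(X x \<bullet> X x)))"
        using bnd[of x] by (intro mult_left_mono) auto
      then show ?thesis by (simp add: algebra_simps)
    qed
    ultimately show "\<exists>y. (?psi has_real_derivative y) (at x) \<and> y \<ge> 0" by blast
  qed
  then have "norm (X t)^2 \<le> exp (2*M*(s-t)) * norm (X s)^2"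
  proof -
    assume h: "?psi t \<le> ?psi s"
    have "norm (X t)^2 = exp (- (2*M*t)) * ?psi t"
      by (simp add: dot_square_norm mult.assoc[symmetric] exp_add[symmetric])
    also have "\<dots> \<le> exp (- (2*M*t)) * ?psi s" using h by simp
    also have "\<dots> = exp (- (2*M*t)) * (exp (2*M * s) * norm (X s)^2)"
      by (simp add: dot_square_norm)
    also have "\<dots> = exp (2*M*(s-t)) * norm (X s)^2"
      by (simp add: mult.assoc[symmetric] exp_add[symmetric] right_diff_distrib)
    finally show ?thesis .
  qed
  also have "\<dots> = (exp (M*(s-t)) * norm (X s))^2"
    by (simp add: power_mult_distrib exp_add[symmetric] power2_eq_square)
  finally show ?thesis
    by (rule power2_le_imp_le) simp
qed

lemma growth:
  fixes X :: "real \<Rightarrow> real^'n"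
  assumes M: "M \<ge> 0" "\<And>t x. norm (A t *v x) \<le> M * norm x"
    and d: "\<And>t. (X has_vector_derivative (A t *v X t)) (at t)"
  shows "norm (X t) \<le> exp (M * \<bar>t - s\<bar>) * norm (X s)"
proof (cases "s \<le> t")
  case True then show ?thesis using growth_fwd[OF M d True] by simp
next
  case False then show ?thesis using growth_bwd[OF M d, of t s] by simp
qed

lemma lin_unique:
  fixes X :: "real \<Rightarrow> real^'n"
  assumes M: "M \<ge> 0" "\<And>t x. norm (A t *v x) \<le> M * norm x"
    and d: "\<And>t. (X has_vector_derivative (A t *v X t)) (at t)"
    and "X s = 0"
  shows "X t = 0"
  using growth[OF M d, of t s] assms(4) by simp


lemma bounded_bilinear_mv: "bounded_bilinear (\<lambda>(M::real^'n^'m) x. M *v x)"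
proof (rule bounded_bilinear.intro)
  show "\<exists>K. \<forall>a b. norm ((a::real^'n^'m) *v b) \<le> norm a * norm b * K"
  proof (intro exI allI)
    fix a :: "real^'n^'m" and b :: "real^'n"
    have "norm (a *v b) \<le> real CARD('m) * real CARD('n) * norm a * norm b" by (rule mv_norm)
    then show "norm (a *v b) \<le> norm a * norm b * (real CARD('m) * real CARD('n))"
      by (simp add: mult_ac)
  qed
next
  fix r and a :: "real^'n^'m" and b
  show "(r *\<^sub>R a) *v b = r *\<^sub>R (a *v b)"
    by (simp add: vec_eq_iff matrix_vector_mult_def sum_distrib_left mult.assoc)
next
  fix r and a :: "real^'n^'m" and b
  show "a *v (r *\<^sub>R b) = r *\<^sub>R (a *v b)"
    by (rule matrix_vector_mult_scaleR)
qed (simp_all add: matrix_vector_mult_add_rdistrib matrix_vector_right_distrib)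

lemma mv_expand:
  fixes M :: "real^'n^'m"
  shows "M *v x = (\<Sum>j\<in>UNIV. (x$j) *\<^sub>R (M *v axis j 1))"
proof -
  have eq: "transpose M $ j = M *v axis j 1" for j
    by (simp add: matrix_vector_mult_basis column_def transpose_def)
  have "M *v x = (\<Sum>j\<in>UNIV. (x$j) *s (transpose M $ j))" by (rule matrix_vector_column)
  also have "\<dots> = (\<Sum>j\<in>UNIV. (x$j) *\<^sub>R (M *v axis j 1))" by (simp only: eq scalar_mult_eq_scaleR)
  finally show ?thesis .
qed

locale lin =
  fixes A :: "real \<Rightarrow> real^'n^'n" and T :: "real \<Rightarrow> real \<Rightarrow> real^'n^'n"
  assumes A_bdd: "bounded (range A)"
    and T_id: "\<And>s. T s s = mat 1"
    and T_deriv: "\<And>t s. ((\<lambda>t. T t s) has_vector_derivative (A t ** T t s)) (at t)"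
begin

lemma A_bound:
  obtains M where "M \<ge> 0" "\<And>t x. norm (A t *v x) \<le> M * norm x"
proof -
  from A_bdd obtain B where B: "\<And>t. norm (A t) \<le> B"
    by (auto simp: bounded_iff)
  let ?C = "real CARD('n) * real CARD('n)"
  show ?thesis
  proof
    show "0 \<le> ?C * max B 0" by simp
    fix t x
    have "norm (A t *v x) \<le> ?C * norm (A t) * norm x" by (rule mv_norm)
    also have "\<dots> \<le> ?C * max B 0 * norm x"
      using B[of t] by (intro mult_right_mono mult_left_mono) auto
    finally show "norm (A t *v x) \<le> ?C * max B 0 * norm x" .
  qed
qed

lemma Tv_deriv: "((\<lambda>t. T t s *v v) has_vector_derivative (A t *v (T t s *v v))) (at t)"
  using bounded_linear.has_vector_derivative[OF
      bounded_bilinear.bounded_linear_left[OF bounded_bilinear_mv] T_deriv[of s t], of v]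
  by (simp add: matrix_vector_mul_assoc)

lemma sol_eq:
  assumes d: "\<And>t. (X has_vector_derivative (A t *v X t)) (at t)"
  shows "X t = T t s *v X s"
proof -
  obtain M where M: "M \<ge> 0" "\<And>t x. norm (A t *v x) \<le> M * norm x" using A_bound by blast
  have "(\<lambda>t. X t - T t s *v X s) t = 0"
  proof (rule lin_unique[OF M, where s=s and t=t])
    fix t
    show "((\<lambda>t. X t - T t s *v X s) has_vector_derivative A t *v (X t - T t s *v X s)) (at t)"
      using has_vector_derivative_diff[OF d Tv_deriv[of s "X s" t]]
      by (simp add: matrix_vector_mult_diff_distrib)
  qed (simp add: T_id)
  then show ?thesis by simp
qed

lemma cocycle_v: "T t s *v (T s r *v v) = T t r *v v"
  using sol_eq[OF Tv_deriv, of t r v s] by simp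

lemma cocycle: "T t s ** T s r = T t r"
  by (simp add: matrix_eq matrix_vector_mul_assoc[symmetric] cocycle_v)

lemma Tv_tendsto_snd: "((\<lambda>s. T s0 s *v v) \<longlongrightarrow> v) (at s0)"
proof -
  obtain M where M: "M \<ge> 0" "\<And>t x. norm (A t *v x) \<le> M * norm x" using A_bound by blast
  let ?C = "real CARD('n) * real CARD('n)"
  have cT: "((\<lambda>s. T s s0) \<longlongrightarrow> T s0 s0) (at s0)"
    using has_vector_derivative_continuous[OF T_deriv[of s0 s0]] by (simp add: continuous_at)
  have g0: "((\<lambda>s. ?C * norm (T s0 s0 - T s s0) * (exp (M * \<bar>s0 - s\<bar>) * norm v)) \<longlongrightarrow>
      ?C * norm (T s0 s0 - T s0 s0) * (exp (M * \<bar>s0 - s0\<bar>) * norm v)) (at s0)"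
    by (intro tendsto_intros cT)
  have "((\<lambda>s. T s0 s *v v - v) \<longlongrightarrow> 0) (at s0)"
  proof (rule Lim_null_comparison[OF _ g0[simplified]])
    show "\<forall>\<^sub>F s in at s0. norm (T s0 s *v v - v) \<le> ?C * norm (T s0 s0 - T s s0) * (exp (M * \<bar>s0 - s\<bar>) * norm v)"
    proof (rule always_eventually, rule allI)
      fix s
      define w where "w = T s0 s *v v"
      have vw: "v = T s s0 *v w" unfolding w_def using cocycle_v[of s s0 s v] by (simp add: T_id)
      have "(T s0 s0 - T s s0) *v w = w - v"
        by (subst vw) (simp add: matrix_vector_mult_diff_rdistrib T_id)
      then have "T s0 s *v v - v = (T s0 s0 - T s s0) *v w"
        by (simp add: w_def)
      then have "norm (T s0 s *v v - v) \<le> ?C * norm (T s0 s0 - T s s0) * norm w"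
        using mv_norm by metis
      also have "norm w \<le> exp (M * \<bar>s0 - s\<bar>) * norm v"
        using growth[OF M Tv_deriv[of s v], of s0 s] by (simp add: w_def T_id)
      then have "?C * norm (T s0 s0 - T s s0) * norm w \<le> ?C * norm (T s0 s0 - T s s0) * (exp (M * \<bar>s0 - s\<bar>) * norm v)"
        by (intro mult_left_mono) auto
      finally show "norm (T s0 s *v v - v) \<le> ?C * norm (T s0 s0 - T s s0) * (exp (M * \<bar>s0 - s\<bar>) * norm v)" .
    qed
  qed
  then show ?thesis by (rule LIM_zero_cancel)
qed

lemma Tv_cont_snd: "isCont (\<lambda>s. T t s *v v) s0"
proof -
  have "((\<lambda>s. T t s0 *v (T s0 s *v v)) \<longlongrightarrow> T t s0 *v v) (at s0)"
    by (rule bounded_linear.tendsto[OF matrix_vector_mul_bounded_linear Tv_tendsto_snd])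
  then show ?thesis by (simp add: continuous_at cocycle_v)
qed

lemma Th_cont:
  assumes "continuous_on S h"
  shows "continuous_on S (\<lambda>s. T t s *v h s)"
proof -
  have "continuous_on S (\<lambda>s. \<Sum>j\<in>UNIV. (h s $ j) *\<^sub>R (T t s *v axis j 1))"
    by (intro continuous_intros assms continuous_at_imp_continuous_on ballI Tv_cont_snd)
  then show ?thesis by (subst mv_expand) simp
qed

end

lemma improper_lower:
  fixes g G :: "real \<Rightarrow> real"
  assumes g_nn: "\<And>s. s \<le> t \<Longrightarrow> g s \<ge> 0"
    and G_der: "\<And>s. s \<le> t \<Longrightarrow> (G has_real_derivative g s) (at s)"
    and lim: "(G \<longlongrightarrow> L) at_bot"
  shows "g integrable_on {..t} \<and> integral {..t} g = G t - L"
proof -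
  define f where "f k s = (if s \<in> {t - real k..t} then g s else 0)" for k :: nat and s
  have hk: "(f k has_integral (G t - G (t - real k))) {..t}" for k
  proof -
    have "(g has_integral (G t - G (t - real k))) {t - real k..t}"
      by (rule fundamental_theorem_of_calculus)
         (auto simp: has_real_derivative_iff_has_vector_derivative[symmetric]
               intro!: DERIV_subset[OF G_der])
    then have "(f k has_integral (G t - G (t - real k))) {t - real k..t}"
      by (subst has_integral_cong[where g=g]) (auto simp: f_def)
    then show ?thesis
      by (rule has_integral_on_superset) (auto simp: f_def)
  qed
  have lk: "((\<lambda>k. G (t - real k)) \<longlongrightarrow> L) sequentially"
  proof -
    have "filterlim (\<lambda>k::nat. t - real k) at_bot sequentially" by real_asymp
    then show ?thesis using lim by (rule filterlim_compose[rotated])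
  qed
  have mc: "g integrable_on {..t} \<and> ((\<lambda>k. integral {..t} (f k)) \<longlongrightarrow> integral {..t} g) sequentially"
  proof (rule monotone_convergence_increasing)
    show "f k integrable_on {..t}" for k using hk by blast
    show "f k x \<le> f (Suc k) x" if "x \<in> {..t}" for k x
      using that g_nn by (auto simp: f_def)
    show "(\<lambda>k. f k x) \<longlonglongrightarrow> g x" if "x \<in> {..t}" for x
    proof (rule tendsto_eventually, rule eventually_sequentiallyI)
      fix k assume "nat \<lceil>t - x\<rceil> \<le> k"
      then have "t - real k \<le> x" by linarith
      then show "f k x = g x" using that by (auto simp: f_def)
    qed
    show "bounded (range (\<lambda>k. integral {..t} (f k)))"
    proof -
      have "(\<lambda>k. integral {..t} (f k)) = (\<lambda>k. G t - G (t - real k))"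
        using hk by (auto intro!: integral_unique)
      moreover have "((\<lambda>k. G t - G (t - real k)) \<longlongrightarrow> G t - L) sequentially"
        by (intro tendsto_intros lk)
      ultimately show ?thesis by (metis convergent_imp_bounded)
    qed
  qed
  have "((\<lambda>k. integral {..t} (f k)) \<longlongrightarrow> G t - L) sequentially"
  proof -
    have "(\<lambda>k. integral {..t} (f k)) = (\<lambda>k. G t - G (t - real k))"
      using hk by (auto intro!: integral_unique)
    then show ?thesis by (simp add: tendsto_intros lk)
  qed
  with mc show ?thesis using LIMSEQ_unique by blast
qed

lemma improper_upper:
  fixes g G :: "real \<Rightarrow> real"
  assumes g_nn: "\<And>s. s \<ge> t \<Longrightarrow> g s \<ge> 0"
    and G_der: "\<And>s. s \<ge> t \<Longrightarrow> (G has_real_derivative g s) (at s)"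
    and lim: "(G \<longlongrightarrow> L) at_top"
  shows "g integrable_on {t..} \<and> integral {t..} g = L - G t"
proof -
  define f where "f k s = (if s \<in> {t..t + real k} then g s else 0)" for k :: nat and s
  have hk: "(f k has_integral (G (t + real k) - G t)) {t..}" for k
  proof -
    have "(g has_integral (G (t + real k) - G t)) {t..t + real k}"
      by (rule fundamental_theorem_of_calculus)
         (auto simp: has_real_derivative_iff_has_vector_derivative[symmetric]
               intro!: DERIV_subset[OF G_der])
    then have "(f k has_integral (G (t + real k) - G t)) {t..t + real k}"
      by (subst has_integral_cong[where g=g]) (auto simp: f_def)
    then show ?thesis
      by (rule has_integral_on_superset) (auto simp: f_def)
  qed
  have lk: "((\<lambda>k. G (t + real k)) \<longlongrightarrow> L) sequentially"
  proof -
    have "filterlim (\<lambda>k::nat. t + real k) at_top sequentially" by real_asymp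
    then show ?thesis using lim by (rule filterlim_compose[rotated])
  qed
  have eq: "(\<lambda>k. integral {t..} (f k)) = (\<lambda>k. G (t + real k) - G t)"
    using hk by (auto intro!: integral_unique)
  have lim2: "((\<lambda>k. integral {t..} (f k)) \<longlongrightarrow> L - G t) sequentially"
    unfolding eq by (intro tendsto_intros lk)
  have mc: "g integrable_on {t..} \<and> ((\<lambda>k. integral {t..} (f k)) \<longlongrightarrow> integral {t..} g) sequentially"
  proof (rule monotone_convergence_increasing)
    show "f k integrable_on {t..}" for k using hk by blast
    show "f k x \<le> f (Suc k) x" if "x \<in> {t..}" for k x
      using that g_nn by (auto simp: f_def)
    show "(\<lambda>k. f k x) \<longlonglongrightarrow> g x" if "x \<in> {t..}" for x
    proof (rule tendsto_eventually, rule eventually_sequentiallyI)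
      fix k assume "nat \<lceil>x - t\<rceil> \<le> k"
      then have "x \<le> t + real k" by linarith
      then show "f k x = g x" using that by (auto simp: f_def)
    qed
    show "bounded (range (\<lambda>k. integral {t..} (f k)))"
      using lim2 by (metis convergent_imp_bounded)
  qed
  with lim2 show ?thesis using LIMSEQ_unique by blast
qed

locale dich = lin A T for A :: "real \<Rightarrow> real^'n^'n" and T +
  fixes \<mu> :: "real \<Rightarrow> real" and P :: "real \<Rightarrow> real^'n^'n" and K \<alpha> :: real
  assumes mu_pos: "\<And>t. \<mu> t > 0"
    and mu_mono: "mono \<mu>"
    and mu_diff: "\<And>t. \<mu> differentiable (at t)"
    and mu_bot: "(\<mu> \<longlongrightarrow> 0) at_bot"
    and mu_top: "filterlim \<mu> at_top at_top"
    and K_pos: "K > 0" and alpha_pos: "\<alpha> > 0"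
    and P_inv: "\<And>t s. T t s ** P s = P t ** T t s"
    and dich_P: "\<And>t s. t \<ge> s \<Longrightarrow> opnorm (T t s ** P s) \<le> K * (\<mu> t / \<mu> s) powr (-\<alpha>)"
    and dich_Q: "\<And>t s. t \<le> s \<Longrightarrow> opnorm (T t s ** (mat 1 - P s)) \<le> K * (\<mu> s / \<mu> t) powr (-\<alpha>)"
begin

lemma mu_der: "(\<mu> has_real_derivative deriv \<mu> s) (at s)"
  using mu_diff DERIV_deriv_iff_real_differentiable by blast

lemma dmu_nn: "deriv \<mu> s \<ge> 0"
proof -
  have "((\<lambda>h. (\<mu> (s + h) - \<mu> s) / h) \<longlongrightarrow> deriv \<mu> s) (at 0)"
    using mu_der DERIV_def by blast
  then have "((\<lambda>h. (\<mu> (s + h) - \<mu> s) / h) \<longlongrightarrow> deriv \<mu> s) (at_right 0)"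
    by (rule tendsto_mono[OF at_within_le_at])
  moreover have "\<forall>\<^sub>F h in at_right 0. 0 \<le> (\<mu> (s + h) - \<mu> s) / h"
    using eventually_at_right_less[of "0::real"]
  proof (rule eventually_mono)
    fix h :: real assume "0 < h"
    then show "0 \<le> (\<mu> (s + h) - \<mu> s) / h"
      using mu_mono by (auto simp: mono_def intro!: divide_nonneg_pos)
  qed
  ultimately show ?thesis by (rule tendsto_lowerbound) simp
qed

definition w :: "real \<Rightarrow> real" where "w s = deriv \<mu> s * inverse (\<mu> s)"

lemma w_nn: "w s \<ge> 0"
  using dmu_nn mu_pos[of s] by (simp add: w_def)

lemma pw: "((\<lambda>s. \<mu> s powr a) has_real_derivative \<mu> s powr a * (deriv \<mu> s * a / \<mu> s)) (at s)"
  using DERIV_powr[OF mu_der mu_pos DERIV_const, of a s] by (simp add: mult.assoc)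

lemma intP:
  assumes c: "c \<ge> 0"
  shows "(\<lambda>s. c * (K * (\<mu> t / \<mu> s) powr (-\<alpha>) * w s)) integrable_on {..t} \<and>
         integral {..t} (\<lambda>s. c * (K * (\<mu> t / \<mu> s) powr (-\<alpha>) * w s)) = c * K / \<alpha>"
proof -
  define G where "G s = c * K * \<mu> t powr (-\<alpha>) * \<mu> s powr \<alpha> / \<alpha>" for s
  have "(\<lambda>s. c * (K * (\<mu> t / \<mu> s) powr (-\<alpha>) * w s)) integrable_on {..t} \<and>
         integral {..t} (\<lambda>s. c * (K * (\<mu> t / \<mu> s) powr (-\<alpha>) * w s)) = G t - 0"
  proof (rule improper_lower)
    fix s :: real
    show "0 \<le> c * (K * (\<mu> t / \<mu> s) powr (-\<alpha>) * w s)"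
      using c K_pos w_nn by simp
    have "(G has_real_derivative c * K * \<mu> t powr (-\<alpha>) * (\<mu> s powr \<alpha> * (deriv \<mu> s * \<alpha> / \<mu> s)) / \<alpha>) (at s)"
      unfolding G_def
      by (intro DERIV_cdivide DERIV_cmult pw)
    moreover have "c * K * \<mu> t powr (-\<alpha>) * (\<mu> s powr \<alpha> * (deriv \<mu> s * \<alpha> / \<mu> s)) / \<alpha> =
        c * (K * (\<mu> t / \<mu> s) powr (-\<alpha>) * w s)"
      using mu_pos[of s] mu_pos[of t] alpha_pos
      by (simp add: w_def powr_divide powr_minus field_simps)
    ultimately show "(G has_real_derivative c * (K * (\<mu> t / \<mu> s) powr (-\<alpha>) * w s)) (at s)"
      by simp
  next
    have "((\<lambda>s. \<mu> s powr \<alpha>) \<longlongrightarrow> 0) at_bot"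
      by (rule tendsto_zero_powrI[OF mu_bot tendsto_const]) (use alpha_pos in \<open>auto intro!: always_eventually less_imp_le mu_pos\<close>)
    then have "(G \<longlongrightarrow> c * K * \<mu> t powr (-\<alpha>) * 0 / \<alpha>) at_bot"
      using alpha_pos unfolding G_def by (intro tendsto_intros) auto
    then show "(G \<longlongrightarrow> 0) at_bot" by simp
  qed
  moreover have "G t = c * K / \<alpha>"
    using mu_pos[of t] by (simp add: G_def powr_minus field_simps)
  ultimately show ?thesis by simp
qed

lemma intQ:
  assumes c: "c \<ge> 0"
  shows "(\<lambda>s. c * (K * (\<mu> s / \<mu> t) powr (-\<alpha>) * w s)) integrable_on {t..} \<and>
         integral {t..} (\<lambda>s. c * (K * (\<mu> s / \<mu> t) powr (-\<alpha>) * w s)) = c * K / \<alpha>"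
proof -
  define G where "G s = - (c * K * \<mu> t powr \<alpha> * \<mu> s powr (-\<alpha>) / \<alpha>)" for s
  have "(\<lambda>s. c * (K * (\<mu> s / \<mu> t) powr (-\<alpha>) * w s)) integrable_on {t..} \<and>
         integral {t..} (\<lambda>s. c * (K * (\<mu> s / \<mu> t) powr (-\<alpha>) * w s)) = 0 - G t"
  proof (rule improper_upper)
    fix s :: real
    show "0 \<le> c * (K * (\<mu> s / \<mu> t) powr (-\<alpha>) * w s)"
      using c K_pos w_nn by simp
    have "(G has_real_derivative - (c * K * \<mu> t powr \<alpha> * (\<mu> s powr (-\<alpha>) * (deriv \<mu> s * (-\<alpha>) / \<mu> s)) / \<alpha>)) (at s)"
      unfolding G_def
      by (intro DERIV_minus DERIV_cdivide DERIV_cmult pw)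
    moreover have "- (c * K * \<mu> t powr \<alpha> * (\<mu> s powr (-\<alpha>) * (deriv \<mu> s * (-\<alpha>) / \<mu> s)) / \<alpha>) =
        c * (K * (\<mu> s / \<mu> t) powr (-\<alpha>) * w s)"
      using mu_pos[of s] mu_pos[of t] alpha_pos
      by (simp add: w_def powr_divide powr_minus field_simps)
    ultimately show "(G has_real_derivative c * (K * (\<mu> s / \<mu> t) powr (-\<alpha>) * w s)) (at s)"
      by simp
  next
    have "((\<lambda>s. \<mu> s powr (-\<alpha>)) \<longlongrightarrow> 0) at_top"
    proof -
      have "((\<lambda>s. inverse (\<mu> s)) \<longlongrightarrow> 0) at_top"
        using mu_top by (rule tendsto_inverse_0_at_top)
      then have "((\<lambda>s. inverse (\<mu> s) powr \<alpha>) \<longlongrightarrow> 0) at_top"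
        by (rule tendsto_zero_powrI[OF _ tendsto_const]) (use alpha_pos in \<open>auto intro!: always_eventually less_imp_le mu_pos\<close>)
      then show ?thesis
        using mu_pos by (simp add: powr_minus inverse_powr)
    qed
    then have "(G \<longlongrightarrow> - (c * K * \<mu> t powr \<alpha> * 0 / \<alpha>)) at_top"
      using alpha_pos unfolding G_def by (intro tendsto_intros) auto
    then show "(G \<longlongrightarrow> 0) at_top" by simp
  qed
  moreover have "G t = - (c * K / \<alpha>)"
    using mu_pos[of t] by (simp add: G_def powr_minus field_simps)
  ultimately show ?thesis by simp
qed

end

context dich begin

definition kP :: "(real \<Rightarrow> real^'n) \<Rightarrow> real \<Rightarrow> real^'n" where
  "kP h s = P 0 *v (T 0 s *v h s)"
definition kQ :: "(real \<Rightarrow> real^'n) \<Rightarrow> real \<Rightarrow> real^'n" where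
  "kQ h s = (mat 1 - P 0) *v (T 0 s *v h s)"
definition Psi :: "(real \<Rightarrow> real^'n) \<Rightarrow> real \<Rightarrow> real^'n" where
  "Psi h t = T t 0 *v (integral {..t} (kP h) - integral {t..} (kQ h))"
definition hyp :: "real \<Rightarrow> (real \<Rightarrow> real^'n) \<Rightarrow> bool" where
  "hyp c h \<longleftrightarrow> c \<ge> 0 \<and> continuous_on UNIV h \<and> (\<forall>s. norm (h s) \<le> c * w s)"

lemma idP: "T t 0 *v kP h s = (T t s ** P s) *v h s"
proof -
  have "T t 0 ** (P 0 ** T 0 s) = T t s ** P s"
    by (simp add: P_inv[of 0 s, symmetric] matrix_mul_assoc cocycle)
  then show ?thesis by (simp add: kP_def matrix_vector_mul_assoc)
qed

lemma idQ: "T t 0 *v kQ h s = (T t s ** (mat 1 - P s)) *v h s"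
proof -
  have "T t 0 *v kQ h s = T t 0 *v (T 0 s *v h s) - T t 0 *v kP h s"
    by (simp add: kQ_def kP_def matrix_vector_mult_diff_rdistrib matrix_vector_mult_diff_distrib)
  also have "\<dots> = T t s *v h s - T t s *v (P s *v h s)"
    by (simp add: idP cocycle_v matrix_vector_mul_assoc cocycle)
  also have "\<dots> = (T t s ** (mat 1 - P s)) *v h s"
    by (simp add: matrix_vector_mul_assoc[symmetric] matrix_vector_mult_diff_rdistrib matrix_vector_mult_diff_distrib)
  finally show ?thesis .
qed

lemma Tback: "T 0 t *v (T t 0 *v x) = x"
  by (simp add: cocycle_v T_id)

lemma kP_cont: "continuous_on UNIV h \<Longrightarrow> continuous_on UNIV (kP h)"
  unfolding kP_def by (rule bounded_linear.continuous_on[OF matrix_vector_mul_bounded_linear Th_cont])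
lemma kQ_cont: "continuous_on UNIV h \<Longrightarrow> continuous_on UNIV (kQ h)"
  unfolding kQ_def by (rule bounded_linear.continuous_on[OF matrix_vector_mul_bounded_linear Th_cont])

lemma opnorm_bound: "norm (M *v x) \<le> opnorm M * norm x"
  unfolding opnorm_def by (rule onorm[OF matrix_vector_mul_bounded_linear])

lemma lower_int:
  assumes h: "hyp c h"
  shows "(\<lambda>s. T t 0 *v kP h s) integrable_on {..t} \<and>
         norm (integral {..t} (\<lambda>s. T t 0 *v kP h s)) \<le> c * K / \<alpha>"
proof -
  have c: "c \<ge> 0" and hc: "continuous_on UNIV h" and hb: "\<And>s. norm (h s) \<le> c * w s"
    using h by (auto simp: hyp_def)
  note gi = intP[OF c, of t]
  have bnd: "norm (T t 0 *v kP h s) \<le> c * (K * (\<mu> t / \<mu> s) powr (-\<alpha>) * w s)" if "s \<in> {..t}" for s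
  proof -
    have "norm (T t 0 *v kP h s) \<le> opnorm (T t s ** P s) * norm (h s)"
      unfolding idP by (rule opnorm_bound)
    also have "\<dots> \<le> (K * (\<mu> t / \<mu> s) powr (-\<alpha>)) * (c * w s)"
      using that dich_P[of s t] hb[of s] K_pos
      by (intro mult_mono) (auto intro: order_trans[OF norm_ge_zero])
    finally show ?thesis by (simp add: mult_ac)
  qed
  have cont: "continuous_on {..t} (\<lambda>s. T t 0 *v kP h s)"
    by (rule continuous_on_subset[OF bounded_linear.continuous_on[OF matrix_vector_mul_bounded_linear kP_cont[OF hc]]]) simp
  have int: "(\<lambda>s. T t 0 *v kP h s) integrable_on {..t}"
    by (rule measurable_bounded_by_integrable_imp_integrable[OF
          continuous_imp_measurable_on_sets_lebesgue[OF cont] conjunct1[OF gi] bnd]) simp_all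
  have "norm (integral {..t} (\<lambda>s. T t 0 *v kP h s)) \<le> integral {..t} (\<lambda>s. c * (K * (\<mu> t / \<mu> s) powr (-\<alpha>) * w s))"
    by (rule integral_norm_bound_integral[OF int conjunct1[OF gi] bnd])
  with gi int show ?thesis by simp
qed

lemma upper_int:
  assumes h: "hyp c h"
  shows "(\<lambda>s. T t 0 *v kQ h s) integrable_on {t..} \<and>
         norm (integral {t..} (\<lambda>s. T t 0 *v kQ h s)) \<le> c * K / \<alpha>"
proof -
  have c: "c \<ge> 0" and hc: "continuous_on UNIV h" and hb: "\<And>s. norm (h s) \<le> c * w s"
    using h by (auto simp: hyp_def)
  note gi = intQ[OF c, of t]
  have bnd: "norm (T t 0 *v kQ h s) \<le> c * (K * (\<mu> s / \<mu> t) powr (-\<alpha>) * w s)" if "s \<in> {t..}" for s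
  proof -
    have "norm (T t 0 *v kQ h s) \<le> opnorm (T t s ** (mat 1 - P s)) * norm (h s)"
      unfolding idQ by (rule opnorm_bound)
    also have "\<dots> \<le> (K * (\<mu> s / \<mu> t) powr (-\<alpha>)) * (c * w s)"
      using that dich_Q[of t s] hb[of s] K_pos
      by (intro mult_mono) (auto intro: order_trans[OF norm_ge_zero])
    finally show ?thesis by (simp add: mult_ac)
  qed
  have cont: "continuous_on {t..} (\<lambda>s. T t 0 *v kQ h s)"
    by (rule continuous_on_subset[OF bounded_linear.continuous_on[OF matrix_vector_mul_bounded_linear kQ_cont[OF hc]]]) simp
  have int: "(\<lambda>s. T t 0 *v kQ h s) integrable_on {t..}"
    by (rule measurable_bounded_by_integrable_imp_integrable[OF
          continuous_imp_measurable_on_sets_lebesgue[OF cont] conjunct1[OF gi] bnd]) simp_all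
  have "norm (integral {t..} (\<lambda>s. T t 0 *v kQ h s)) \<le> integral {t..} (\<lambda>s. c * (K * (\<mu> s / \<mu> t) powr (-\<alpha>) * w s))"
    by (rule integral_norm_bound_integral[OF int conjunct1[OF gi] bnd])
  with gi int show ?thesis by simp
qed

lemma kP_int:
  assumes "hyp c h" shows "kP h integrable_on {..t}"
proof -
  have "((*v) (T 0 t) \<circ> (\<lambda>s. T t 0 *v kP h s)) integrable_on {..t}"
    by (rule integrable_linear[OF conjunct1[OF lower_int[OF assms]] matrix_vector_mul_bounded_linear])
  moreover have "((*v) (T 0 t) \<circ> (\<lambda>s. T t 0 *v kP h s)) = kP h"
    by (simp add: o_def Tback)
  ultimately show ?thesis by simp
qed

lemma kQ_int:
  assumes "hyp c h" shows "kQ h integrable_on {t..}"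
proof -
  have "((*v) (T 0 t) \<circ> (\<lambda>s. T t 0 *v kQ h s)) integrable_on {t..}"
    by (rule integrable_linear[OF conjunct1[OF upper_int[OF assms]] matrix_vector_mul_bounded_linear])
  moreover have "((*v) (T 0 t) \<circ> (\<lambda>s. T t 0 *v kQ h s)) = kQ h"
    by (simp add: o_def Tback)
  ultimately show ?thesis by simp
qed

lemma Psi_bound:
  assumes "hyp c h" shows "norm (Psi h t) \<le> 2 * c * K / \<alpha>"
proof -
  have eP: "T t 0 *v integral {..t} (kP h) = integral {..t} (\<lambda>s. T t 0 *v kP h s)"
    using integral_linear[OF kP_int[OF assms] matrix_vector_mul_bounded_linear[of "T t 0"]]
    by (simp add: o_def)
  have eQ: "T t 0 *v integral {t..} (kQ h) = integral {t..} (\<lambda>s. T t 0 *v kQ h s)"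
    using integral_linear[OF kQ_int[OF assms] matrix_vector_mul_bounded_linear[of "T t 0"]]
    by (simp add: o_def)
  have "norm (Psi h t) \<le> norm (T t 0 *v integral {..t} (kP h)) + norm (T t 0 *v integral {t..} (kQ h))"
    unfolding Psi_def matrix_vector_mult_diff_distrib by (rule norm_triangle_ineq4)
  also have "\<dots> \<le> c * K / \<alpha> + c * K / \<alpha>"
    unfolding eP eQ using lower_int[OF assms] upper_int[OF assms] by (intro add_mono) auto
  finally show ?thesis by (simp add: mult_ac)
qed

end

context dich begin

lemma IP_deriv:
  assumes h: "hyp c h"
  shows "((\<lambda>t. integral {..t} (kP h)) has_vector_derivative kP h x) (at x)"
proof -
  define a where "a = x - 1"
  define b where "b = x + 1"
  have hc: "continuous_on UNIV h" using h by (simp add: hyp_def)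
  have kc: "continuous_on S (kP h)" for S
    using continuous_on_subset[OF kP_cont[OF hc]] by blast
  have split: "integral {..a} (kP h) + integral {a..y} (kP h) = integral {..y} (kP h)" if "y \<in> {a<..}" for y
  proof -
    have u: "{..a} \<union> {a..y} = {..y}" and i: "{..a} \<inter> {a..y} = {a}" using that by auto
    have i2: "kP h integrable_on {a..y}" by (rule integrable_continuous_interval[OF kc])
    have "integral ({..a} \<union> {a..y}) (kP h) = integral {..a} (kP h) + integral {a..y} (kP h)"
      by (rule integral_Un[OF kP_int[OF h, of a] i2]) (unfold i, rule negligible_sing)
    then show ?thesis by (simp add: u)
  qed
  have "((\<lambda>y. integral {a..y} (kP h)) has_vector_derivative kP h x) (at x within {a..b})"
    by (rule integral_has_vector_derivative[OF kc]) (auto simp: a_def b_def)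
  moreover have "at x within {a..b} = at x"
    by (rule at_within_Icc_at) (auto simp: a_def b_def)
  ultimately have "((\<lambda>y. integral {a..y} (kP h)) has_vector_derivative kP h x) (at x)" by simp
  then have "((\<lambda>y. integral {..a} (kP h) + integral {a..y} (kP h)) has_vector_derivative 0 + kP h x) (at x)"
    by (intro has_vector_derivative_add has_vector_derivative_const)
  then have "((\<lambda>y. integral {..a} (kP h) + integral {a..y} (kP h)) has_vector_derivative kP h x) (at x)"
    by simp
  then show ?thesis
    by (rule has_vector_derivative_transform_within_open[of _ _ _ "{a<..}"]) (use split in \<open>auto simp: a_def\<close>)
qed

lemma IQ_deriv:
  assumes h: "hyp c h"
  shows "((\<lambda>t. integral {t..} (kQ h)) has_vector_derivative - kQ h x) (at x)"
proof -
  define a where "a = x - 1"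
  define b where "b = x + 1"
  have hc: "continuous_on UNIV h" using h by (simp add: hyp_def)
  have kc: "continuous_on S (kQ h)" for S
    using continuous_on_subset[OF kQ_cont[OF hc]] by blast
  have split: "(integral {a..b} (kQ h) + integral {b..} (kQ h)) - integral {a..y} (kQ h) = integral {y..} (kQ h)"
    if "y \<in> {a<..<b}" for y
  proof -
    have u: "{y..b} \<union> {b..} = {y..}" and i: "{y..b} \<inter> {b..} = {b}" using that by auto
    have i2: "kQ h integrable_on {y..b}" by (rule integrable_continuous_interval[OF kc])
    have "integral ({y..b} \<union> {b..}) (kQ h) = integral {y..b} (kQ h) + integral {b..} (kQ h)"
      by (rule integral_Un[OF i2 kQ_int[OF h, of b]]) (unfold i, rule negligible_sing)
    then have "integral {y..} (kQ h) = integral {y..b} (kQ h) + integral {b..} (kQ h)"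
      by (simp add: u)
    moreover have "integral {a..y} (kQ h) + integral {y..b} (kQ h) = integral {a..b} (kQ h)"
      using that by (intro Henstock_Kurzweil_Integration.integral_combine integrable_continuous_interval[OF kc]) auto
    ultimately show ?thesis by (simp add: algebra_simps)
  qed
  have "((\<lambda>y. integral {a..y} (kQ h)) has_vector_derivative kQ h x) (at x within {a..b})"
    by (rule integral_has_vector_derivative[OF kc]) (auto simp: a_def b_def)
  moreover have "at x within {a..b} = at x"
    by (rule at_within_Icc_at) (auto simp: a_def b_def)
  ultimately have "((\<lambda>y. integral {a..y} (kQ h)) has_vector_derivative kQ h x) (at x)" by simp
  then have "((\<lambda>y. (integral {a..b} (kQ h) + integral {b..} (kQ h)) - integral {a..y} (kQ h)) has_vector_derivative 0 - kQ h x) (at x)"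
    by (intro has_vector_derivative_diff has_vector_derivative_const)
  then have "((\<lambda>y. (integral {a..b} (kQ h) + integral {b..} (kQ h)) - integral {a..y} (kQ h)) has_vector_derivative - kQ h x) (at x)"
    by simp
  then show ?thesis
    by (rule has_vector_derivative_transform_within_open[of _ _ _ "{a<..<b}"]) (use split in \<open>auto simp: a_def b_def\<close>)
qed

lemma Psi_deriv:
  assumes h: "hyp c h"
  shows "(Psi h has_vector_derivative (A t *v Psi h t + h t)) (at t)"
proof -
  define D where "D t = integral {..t} (kP h) - integral {t..} (kQ h)" for t
  have dD: "(D has_vector_derivative (kP h t - - kQ h t)) (at t)"
    unfolding D_def by (intro has_vector_derivative_diff IP_deriv[OF h] IQ_deriv[OF h])
  have "((\<lambda>x. T x 0 *v D x) has_vector_derivative (T t 0 *v (kP h t - - kQ h t) + (A t ** T t 0) *v D t)) (at t)"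
    using bounded_bilinear.has_vector_derivative[OF bounded_bilinear_mv T_deriv[of 0 t] dD] by simp
  moreover have "T t 0 *v (kP h t - - kQ h t) = h t"
  proof -
    have "kP h t - - kQ h t = T 0 t *v h t"
      by (simp add: kP_def kQ_def matrix_vector_mult_diff_rdistrib)
    then show ?thesis by (simp add: cocycle_v T_id)
  qed
  moreover have "(A t ** T t 0) *v D t = A t *v Psi h t"
    by (simp add: Psi_def D_def matrix_vector_mul_assoc)
  ultimately show ?thesis
    by (simp add: Psi_def[abs_def] D_def[symmetric] add.commute)
qed

lemma Psi_diff:
  assumes h1: "hyp c1 h1" and h2: "hyp c2 h2"
  shows "Psi (\<lambda>s. h1 s - h2 s) t = Psi h1 t - Psi h2 t"
proof -
  have eP: "kP (\<lambda>s. h1 s - h2 s) = (\<lambda>s. kP h1 s - kP h2 s)"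
    by (simp add: kP_def[abs_def] matrix_vector_mult_diff_distrib)
  have eQ: "kQ (\<lambda>s. h1 s - h2 s) = (\<lambda>s. kQ h1 s - kQ h2 s)"
    by (simp add: kQ_def[abs_def] matrix_vector_mult_diff_distrib)
  show ?thesis
    unfolding Psi_def eP eQ
    by (simp add: Henstock_Kurzweil_Integration.integral_diff kP_int[OF h1] kP_int[OF h2]
        kQ_int[OF h1] kQ_int[OF h2] matrix_vector_mult_diff_distrib algebra_simps)
qed

lemma hom_zero:
  assumes d: "\<And>t. (W has_vector_derivative (A t *v W t)) (at t)"
    and bW: "bounded (range W)"
  shows "W t = 0"
proof -
  obtain B where B: "\<And>s. norm (W s) \<le> B" using bW by (auto simp: bounded_iff)
  have Ws: "W t = T t s *v W s" for s by (rule sol_eq[OF d])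
  have rw: "(x / y) powr (-\<alpha>) = (y / x) powr \<alpha>" if "x > 0" "y > 0" for x y :: real
    using that by (simp add: powr_minus inverse_powr[symmetric])
  have pP: "norm (P t *v W t) \<le> 0"
  proof (rule tendsto_lowerbound)
    have "((\<lambda>s. \<mu> s / \<mu> t) \<longlongrightarrow> 0 / \<mu> t) at_bot"
      by (intro tendsto_intros mu_bot) (use mu_pos[of t] in auto)
    then have "((\<lambda>s. (\<mu> s / \<mu> t) powr \<alpha>) \<longlongrightarrow> 0) at_bot"
      by (intro tendsto_zero_powrI[OF _ tendsto_const]) (use alpha_pos mu_pos in \<open>auto intro!: always_eventually less_imp_le divide_pos_pos\<close>)
    then have "((\<lambda>s. K * (\<mu> s / \<mu> t) powr \<alpha> * B) \<longlongrightarrow> K * 0 * B) at_bot"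
      by (intro tendsto_intros)
    then show "((\<lambda>s. K * (\<mu> s / \<mu> t) powr \<alpha> * B) \<longlongrightarrow> 0) at_bot" by simp
    show "\<forall>\<^sub>F s in at_bot. norm (P t *v W t) \<le> K * (\<mu> s / \<mu> t) powr \<alpha> * B"
      using eventually_le_at_bot[of t]
    proof (rule eventually_mono)
      fix s assume st: "s \<le> t"
      have "P t *v W t = (T t s ** P s) *v W s"
        by (simp add: Ws[of s] matrix_vector_mul_assoc P_inv)
      then have "norm (P t *v W t) \<le> opnorm (T t s ** P s) * norm (W s)"
        using opnorm_bound by metis
      also have "\<dots> \<le> (K * (\<mu> t / \<mu> s) powr (-\<alpha>)) * B"
        using dich_P[OF st] B[of s] K_pos
        by (intro mult_mono) (auto intro: order_trans[OF norm_ge_zero])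
      finally show "norm (P t *v W t) \<le> K * (\<mu> s / \<mu> t) powr \<alpha> * B"
        using rw[OF mu_pos mu_pos, of t s] by simp
    qed
  qed simp
  have pQ: "norm ((mat 1 - P t) *v W t) \<le> 0"
  proof (rule tendsto_lowerbound)
    have "((\<lambda>s. \<mu> t * inverse (\<mu> s)) \<longlongrightarrow> \<mu> t * 0) at_top"
      by (intro tendsto_intros tendsto_inverse_0_at_top mu_top)
    then have "((\<lambda>s. \<mu> t / \<mu> s) \<longlongrightarrow> 0) at_top" by (simp add: divide_inverse)
    then have "((\<lambda>s. (\<mu> t / \<mu> s) powr \<alpha>) \<longlongrightarrow> 0) at_top"
      by (intro tendsto_zero_powrI[OF _ tendsto_const]) (use alpha_pos mu_pos in \<open>auto intro!: always_eventually less_imp_le divide_pos_pos\<close>)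
    then have "((\<lambda>s. K * (\<mu> t / \<mu> s) powr \<alpha> * B) \<longlongrightarrow> K * 0 * B) at_top"
      by (intro tendsto_intros)
    then show "((\<lambda>s. K * (\<mu> t / \<mu> s) powr \<alpha> * B) \<longlongrightarrow> 0) at_top" by simp
    show "\<forall>\<^sub>F s in at_top. norm ((mat 1 - P t) *v W t) \<le> K * (\<mu> t / \<mu> s) powr \<alpha> * B"
      using eventually_ge_at_top[of t]
    proof (rule eventually_mono)
      fix s assume st: "t \<le> s"
      have e1: "(T t s ** (mat 1 - P s)) *v W s = T t s *v W s - (T t s ** P s) *v W s"
        by (simp add: matrix_vector_mul_assoc[symmetric] matrix_vector_mult_diff_rdistrib
              matrix_vector_mult_diff_distrib)
      have e2: "P t *v W t = (P t ** T t s) *v W s"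
        by (subst Ws[of s]) (simp add: matrix_vector_mul_assoc)
      have "(mat 1 - P t) *v W t = (T t s ** (mat 1 - P s)) *v W s"
        unfolding e1 by (simp add: matrix_vector_mult_diff_rdistrib e2 P_inv flip: Ws)
      then have "norm ((mat 1 - P t) *v W t) \<le> opnorm (T t s ** (mat 1 - P s)) * norm (W s)"
        using opnorm_bound by metis
      also have "\<dots> \<le> (K * (\<mu> s / \<mu> t) powr (-\<alpha>)) * B"
        using dich_Q[OF st] B[of s] K_pos
        by (intro mult_mono) (auto intro: order_trans[OF norm_ge_zero])
      finally show "norm ((mat 1 - P t) *v W t) \<le> K * (\<mu> t / \<mu> s) powr \<alpha> * B"
        using rw[OF mu_pos mu_pos, of s t] by simp
    qed
  qed simp
  have "W t = P t *v W t + (mat 1 - P t) *v W t"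
    by (simp add: matrix_vector_mult_diff_rdistrib)
  with pP pQ show ?thesis by simp
qed

end

context dich begin

lemma exists_unique_bounded:
  fixes f :: "real \<Rightarrow> real^'n \<Rightarrow> real^'n" and y :: "real \<Rightarrow> real^'n"
  assumes f_cont: "continuous_on UNIV (\<lambda>(t, x). f t x)"
    and beta_nonneg: "\<beta> \<ge> 0" and gamma_nonneg: "\<gamma> \<ge> 0"
    and f_bdd: "\<And>t x. norm (f t x) \<le> \<beta> * deriv \<mu> t * inverse (\<mu> t)"
    and f_lip: "\<And>t x1 x2. norm (f t x1 - f t x2) \<le> \<gamma> * deriv \<mu> t * inverse (\<mu> t) * norm (x1 - x2)"
    and small: "6 * K * \<gamma> / \<alpha> < 1"
    and y_cont: "continuous_on UNIV y"
  shows "\<exists>!Z. (\<forall>t. (Z has_vector_derivative (A t *v Z t + f t (y t + Z t))) (at t)) \<and> bounded (range Z)"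
proof -
  define F where "F Z s = f s (y s + Z s)" for Z :: "real \<Rightarrow> real^'n" and s
  have Fc: "continuous_on UNIV (F Z)" if "continuous_on UNIV Z" for Z
  proof -
    have "continuous_on UNIV ((\<lambda>(t, x). f t x) \<circ> (\<lambda>s. (s, y s + Z s)))"
      by (rule continuous_on_compose[OF _ continuous_on_subset[OF f_cont subset_UNIV]])
         (intro continuous_intros y_cont that)
    then show ?thesis by (simp add: F_def[abs_def] o_def)
  qed
  have hypF: "hyp \<beta> (F Z)" if "continuous_on UNIV Z" for Z
    using beta_nonneg Fc[OF that] f_bdd by (simp add: hyp_def F_def w_def mult.assoc)
  have Psi_bc: "Psi (F Z) \<in> bcontfun" if "continuous_on UNIV Z" for Z
  proof -
    have "continuous_on UNIV (Psi (F Z))"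
      by (intro continuous_at_imp_continuous_on ballI has_vector_derivative_continuous[OF Psi_deriv[OF hypF[OF that]]])
    moreover have "bounded (range (Psi (F Z)))"
      using Psi_bound[OF hypF[OF that]] by (auto simp: bounded_iff)
    ultimately show ?thesis by (simp add: bcontfun_def)
  qed
  define \<Phi> where "\<Phi> X = Bcontfun (Psi (F (apply_bcontfun X)))" for X :: "(real, real^'n) bcontfun"
  have \<Phi>_app: "apply_bcontfun (\<Phi> X) = Psi (F (apply_bcontfun X))" for X
    unfolding \<Phi>_def by (rule Bcontfun_inverse[OF Psi_bc[OF continuous_on_apply_bcontfun]])
  define q where "q = 2 * K * \<gamma> / \<alpha>"
  have q: "0 \<le> q" "q < 1"
  proof -
    show "0 \<le> q" using K_pos alpha_pos gamma_nonneg by (simp add: q_def)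
    have "q \<le> 6 * K * \<gamma> / \<alpha>"
      using K_pos alpha_pos gamma_nonneg by (simp add: q_def divide_right_mono)
    with small show "q < 1" by simp
  qed
  have contr: "\<forall>X1 X2. dist (\<Phi> X1) (\<Phi> X2) \<le> q * dist X1 X2"
  proof (intro allI dist_bound)
    fix X1 X2 :: "(real, real^'n) bcontfun" and t
    let ?D = "dist X1 X2"
    have h1: "hyp \<beta> (F (apply_bcontfun X1))" and h2: "hyp \<beta> (F (apply_bcontfun X2))"
      by (intro hypF continuous_on_apply_bcontfun)+
    have hd: "hyp (\<gamma> * ?D) (\<lambda>s. F (apply_bcontfun X1) s - F (apply_bcontfun X2) s)"
      unfolding hyp_def
    proof (intro conjI allI)
      show "0 \<le> \<gamma> * ?D" using gamma_nonneg by simp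
      show "continuous_on UNIV (\<lambda>s. F (apply_bcontfun X1) s - F (apply_bcontfun X2) s)"
        by (intro continuous_intros Fc continuous_on_apply_bcontfun)
      fix s
      have "norm (F (apply_bcontfun X1) s - F (apply_bcontfun X2) s) \<le> \<gamma> * w s * norm (X1 s - X2 s)"
        using f_lip[of s "y s + X1 s" "y s + X2 s"] by (simp add: F_def w_def mult.assoc)
      also have "\<dots> \<le> \<gamma> * w s * ?D"
        using dist_bounded[of X1 s X2] gamma_nonneg w_nn[of s]
        by (intro mult_left_mono) (auto simp: dist_norm)
      finally show "norm (F (apply_bcontfun X1) s - F (apply_bcontfun X2) s) \<le> \<gamma> * ?D * w s"
        by (simp add: mult_ac)
    qed
    have "dist (\<Phi> X1 t) (\<Phi> X2 t) = norm (Psi (\<lambda>s. F (apply_bcontfun X1) s - F (apply_bcontfun X2) s) t)"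
      by (simp add: \<Phi>_app dist_norm Psi_diff[OF h1 h2])
    also have "\<dots> \<le> 2 * (\<gamma> * ?D) * K / \<alpha>" by (rule Psi_bound[OF hd])
    also have "\<dots> = q * ?D" by (simp add: q_def)
    finally show "dist (\<Phi> X1 t) (\<Phi> X2 t) \<le> q * ?D" .
  qed
  obtain X where fixX: "\<Phi> X = X" and uniq: "\<And>X'. \<Phi> X' = X' \<Longrightarrow> X' = X"
    using banach_fix_type[OF q contr] by metis
  show ?thesis
  proof (rule ex1I[of _ "apply_bcontfun X"])
    have eq: "apply_bcontfun X = Psi (F (apply_bcontfun X))"
      using \<Phi>_app[of X] fixX by simp
    show "(\<forall>t. (apply_bcontfun X has_vector_derivative (A t *v X t + f t (y t + X t))) (at t)) \<and> bounded (range (apply_bcontfun X))"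
    proof (intro conjI allI bounded_apply_bcontfun)
      fix t
      show "(apply_bcontfun X has_vector_derivative (A t *v X t + f t (y t + X t))) (at t)"
        using Psi_deriv[OF hypF[OF continuous_on_apply_bcontfun], of X t] eq
        by (metis F_def)
    qed
  next
    fix Z assume Z: "(\<forall>t. (Z has_vector_derivative (A t *v Z t + f t (y t + Z t))) (at t)) \<and> bounded (range Z)"
    have Zc: "continuous_on UNIV Z"
      using Z by (intro continuous_at_imp_continuous_on ballI has_vector_derivative_continuous) blast
    note hZ = hypF[OF Zc]
    have W0: "Z t - Psi (F Z) t = 0" for t
    proof (rule hom_zero[where W = "\<lambda>t. Z t - Psi (F Z) t"])
      fix t
      show "((\<lambda>t. Z t - Psi (F Z) t) has_vector_derivative A t *v (Z t - Psi (F Z) t)) (at t)"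
        using has_vector_derivative_diff[OF conjunct1[OF Z, rule_format, of t] Psi_deriv[OF hZ, of t]]
        by (simp add: F_def matrix_vector_mult_diff_distrib)
    next
      obtain B where "\<And>t. norm (Z t) \<le> B" using Z by (auto simp: bounded_iff)
      then have "norm (Z t - Psi (F Z) t) \<le> B + 2 * \<beta> * K / \<alpha>" for t
        using Psi_bound[OF hZ, of t] norm_triangle_ineq4[of "Z t" "Psi (F Z) t"] by (smt (verit))
      then show "bounded (range (\<lambda>t. Z t - Psi (F Z) t))" by (auto simp: bounded_iff)
    qed
    then have ZP: "Z = Psi (F Z)" by auto
    have Zbc: "Z \<in> bcontfun" using Zc Z by (simp add: bcontfun_def)
    have "\<Phi> (Bcontfun Z) = Bcontfun Z"
      unfolding \<Phi>_def by (simp add: Bcontfun_inverse[OF Zbc] ZP[symmetric])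
    then have "Bcontfun Z = X" by (rule uniq)
    then show "Z = apply_bcontfun X" using Bcontfun_inverse[OF Zbc] by auto
  qed
qed

end

theorem lemma3p6:
  fixes A :: "real \<Rightarrow> real^'n^'n"
    and T :: "real \<Rightarrow> real \<Rightarrow> real^'n^'n"
    and \<mu> :: "real \<Rightarrow> real"
    and P :: "real \<Rightarrow> real^'n^'n"
    and K \<alpha> \<beta> \<gamma> :: real
    and f :: "real \<Rightarrow> real^'n \<Rightarrow> real^'n"
    and t0 :: real and y0 :: "real^'n"
  assumes A_cont: "continuous_on UNIV A"
    and A_bdd: "bounded (range A)"
    and T_id: "\<And>s. T s s = mat 1"
    and T_deriv: "\<And>t s. ((\<lambda>t. T t s) has_vector_derivative (A t ** T t s)) (at t)"
    and mu_pos: "\<And>t. \<mu> t > 0"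
    and mu_mono: "mono \<mu>"
    and mu_diff: "\<And>t. \<mu> differentiable (at t)"
    and mu_0: "\<mu> 0 = 1"
    and mu_bot: "(\<mu> \<longlongrightarrow> 0) at_bot"
    and mu_top: "filterlim \<mu> at_top at_top"
    and P_proj: "\<And>s. P s ** P s = P s"
    and K_pos: "K > 0" and alpha_pos: "\<alpha> > 0"
    and P_inv: "\<And>t s. T t s ** P s = P t ** T t s"
    and dich_P: "\<And>t s. t \<ge> s \<Longrightarrow> opnorm (T t s ** P s) \<le> K * (\<mu> t / \<mu> s) powr (-\<alpha>)"
    and dich_Q: "\<And>t s. t \<le> s \<Longrightarrow> opnorm (T t s ** (mat 1 - P s)) \<le> K * (\<mu> s / \<mu> t) powr (-\<alpha>)"
    and f_cont: "continuous_on UNIV (\<lambda>(t, x). f t x)"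
    and beta_nonneg: "\<beta> \<ge> 0" and gamma_nonneg: "\<gamma> \<ge> 0"
    and f_bdd: "\<And>t x. norm (f t x) \<le> \<beta> * deriv \<mu> t * inverse (\<mu> t)"
    and f_lip: "\<And>t x1 x2. norm (f t x1 - f t x2) \<le> \<gamma> * deriv \<mu> t * inverse (\<mu> t) * norm (x1 - x2)"
    and small: "6 * K * \<gamma> / \<alpha> < 1"
  shows "\<forall>t. ((\<lambda>t. Gmap A f T t (Ysol T t t0 y0)) has_vector_derivative
            (A t *v Gmap A f T t (Ysol T t t0 y0) + f t (Gmap A f T t (Ysol T t t0 y0)))) (at t)"
proof -
  interpret dich A T \<mu> P K \<alpha>
    by (rule dich.intro, rule lin.intro, fact A_bdd, fact T_id, fact T_deriv, rule dich_axioms.intro)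
       (fact mu_pos mu_mono mu_diff mu_bot mu_top K_pos alpha_pos P_inv dich_P dich_Q)+
  define Y where "Y t = Ysol T t t0 y0" for t
  have Yd: "(Y has_vector_derivative (A t *v Y t)) (at t)" for t
    unfolding Y_def[abs_def] Ysol_def by (rule Tv_deriv)
  have Yc: "continuous_on UNIV Y"
    by (intro continuous_at_imp_continuous_on ballI has_vector_derivative_continuous[OF Yd])
  define g where "g = gsol A f T t0 y0"
  have g_eq: "gsol A f T t (Y t) = g" for t
    by (simp add: g_def gsol_def Y_def Ysol_def cocycle_v)
  have ex: "\<exists>!Z. (\<forall>t. (Z has_vector_derivative (A t *v Z t + f t (Y t + Z t))) (at t)) \<and> bounded (range Z)"
    by (rule exists_unique_bounded[OF f_cont beta_nonneg gamma_nonneg f_bdd f_lip small Yc])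
  have gdef: "g = (THE Z. (\<forall>t. (Z has_vector_derivative (A t *v Z t + f t (Y t + Z t))) (at t)) \<and> bounded (range Z))"
    by (simp add: g_def gsol_def Y_def)
  have gd: "(g has_vector_derivative (A t *v g t + f t (Y t + g t))) (at t)" for t
    using theI'[OF ex] unfolding gdef[symmetric] by blast
  have GY: "(\<lambda>t. Gmap A f T t (Ysol T t t0 y0)) = (\<lambda>t. Y t + g t)"
    by (simp add: Gmap_def g_eq[unfolded Y_def] Y_def)
  show ?thesis
  proof
    fix t
    have "((\<lambda>t. Y t + g t) has_vector_derivative (A t *v Y t + (A t *v g t + f t (Y t + g t)))) (at t)"
      by (rule has_vector_derivative_add[OF Yd gd])
    then show "((\<lambda>t. Gmap A f T t (Ysol T t t0 y0)) has_vector_derivative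
            (A t *v Gmap A f T t (Ysol T t t0 y0) + f t (Gmap A f T t (Ysol T t t0 y0)))) (at t)"
      unfolding GY using fun_cong[OF GY, of t] by (simp add: matrix_vector_right_distrib add.assoc)
  qed
qed

end
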